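(* Assume the scores are produced by a symmetric transformation and the intervals $\mathcal{I}_1,\ldots,\mathcal{I}_L$ are fixed (do not depend on the data). Then: (i) (Joint distribution-freeness) Under $H_0$ (i.e. $Z_1,\ldots,Z_n$ i.i.d. with an arbitrary law $P_1$), $(T_{n,1},\ldots,T_{n,L})$ has the same distribution as $\mathbb{G}(\pi)$, where $\pi$ is a uniformly random permutation of $[n]$; in particular its joint distribution does not depend on $P_1$. (ii) (Pivotalness to changes) If every interval $\mathcal{I}_\ell$, $\ell\in[L]$, contains no changepoint, i.e. for each $\ell$ there is $k\in[K^*+1]$ with $\mathcal{I}_\ell\subset(\tau^*_{k-1},\tau^*_k]$, then the joint distribution of $(T_{n,1},\ldots,T_{n,L})$ under the true law $\mathbb{P}^*$ is the same as under $H_0$ (namely the law of $\mathbb{G}(\pi)$).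
   Context: Let $Z_1,\ldots,Z_n$ be independent random elements of a measurable space $\mathcal{Z}$, $\mathcal{D}=(Z_1,\ldots,Z_n)$, with joint law $\mathbb{P}^*$. Changepoint model: there are $K^*\ge0$ and integers $0=\tau^*_0<\tau^*_1<\cdots<\tau^*_{K^*}<\tau^*_{K^*+1}=n$ such that for each $k\in[K^*+1]$ the $Z_i$, $i\in(\tau^*_{k-1},\tau^*_k]$, are identically distributed with law $P^*_k$, and $P^*_{k+1}\ne P^*_k$ for $k\in[K^*]$. The null hypothesis $H_0$ is $K^*=0$. A measurable $\mathbb{S}:\mathcal{Z}\times\mathcal{Z}^n\to\mathbb{R}$ is a symmetric transformation if $\mathbb{S}(z;\mathcal{D})=\mathbb{S}(z;\mathcal{D}_\pi)$ for all $z$ and all permutations $\pi$ of $[n]$, where $\mathcal{D}_\pi=(Z_{\pi(1)},\ldots,Z_{\pi(n)})$. Scores: $S_i=\mathbb{S}(Z_i;\mathcal{D})+\epsilon e_i$ with fixed $\epsilon>0$ and $e_i$ i.i.d. $\mathcal{N}(0,1)$ independent of the data. Let $\mathcal{I}_1,\ldots,\mathcal{I}_L$ be nonempty subsets (intervals) of $\{1,\ldots,n\}$ (possibly overlapping). For $i\in\mathcal{I}_\ell$ the local rank is $R_{i,\ell}=|\{j\in\mathcal{I}_\ell:S_j\le S_i\}|$. An aggregation function $\mathbb{A}$ maps a finite vector of ranks to $\mathbb{R}$; $T_{n,\ell}=\mathbb{A}((R_{i,\ell})_{i\in\mathcal{I}_\ell})$, the ranks listed in increasing order of $i$. For a permutation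 $\pi$ of $[n]$ define $\mathbb{G}(\pi)\in\mathbb{R}^L$ by $\mathbb{G}(\pi)_\ell=\mathbb{A}\big((|\{j\in\mathcal{I}_\ell:\pi(j)\le\pi(i)\}|)_{i\in\mathcal{I}_\ell}\big)$. *)

theory Defs
  imports "HOL-Probability.Probability"
begin

text \<open>Indices are 1-based: observations are indexed by {1..n}, intervals by {1..L}.
  A data set D is a function nat => 'a (entries D 1, ..., D n).\<close>

definition std_normal_measure :: "real measure" where
  "std_normal_measure = density lborel std_normal_density"

definition score :: "('a \<Rightarrow> (nat \<Rightarrow> 'a) \<Rightarrow> real) \<Rightarrow> real \<Rightarrow> (nat \<Rightarrow> 'a) \<Rightarrow> (nat \<Rightarrow> real) \<Rightarrow> nat \<Rightarrow> real" where
  "score SS eps D e i = SS (D i) D + eps * e i"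

definition local_rank :: "(nat \<Rightarrow> real) \<Rightarrow> nat set \<Rightarrow> nat \<Rightarrow> nat" where
  "local_rank S Il i = card {j \<in> Il. S j \<le> S i}"

definition Tstat :: "('a \<Rightarrow> (nat \<Rightarrow> 'a) \<Rightarrow> real) \<Rightarrow> real \<Rightarrow> (nat list \<Rightarrow> real) \<Rightarrow> nat \<Rightarrow> (nat \<Rightarrow> nat set)
    \<Rightarrow> (nat \<Rightarrow> 'a) \<times> (nat \<Rightarrow> real) \<Rightarrow> nat \<Rightarrow> real" where
  "Tstat SS eps A L I = (\<lambda>(D, e). \<lambda>l\<in>{1..L}.
      A (map (local_rank (score SS eps D e) (I l)) (sorted_list_of_set (I l))))"

definition Gmap :: "(nat list \<Rightarrow> real) \<Rightarrow> nat \<Rightarrow> (nat \<Rightarrow> nat set) \<Rightarrow> (nat \<Rightarrow> nat) \<Rightarrow> nat \<Rightarrow> real" where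
  "Gmap A L I \<pi> = (\<lambda>l\<in>{1..L}.
      A (map (\<lambda>i. card {j \<in> I l. \<pi> j \<le> \<pi> i}) (sorted_list_of_set (I l))))"

definition out_space :: "nat \<Rightarrow> (nat \<Rightarrow> real) measure" where
  "out_space L = PiM {1..L} (\<lambda>_. borel)"

definition Glaw :: "(nat list \<Rightarrow> real) \<Rightarrow> nat \<Rightarrow> (nat \<Rightarrow> nat set) \<Rightarrow> nat \<Rightarrow> (nat \<Rightarrow> real) measure" where
  "Glaw A L I n = distr (measure_pmf (pmf_of_set {\<pi>. \<pi> permutes {1..n}})) (out_space L) (Gmap A L I)"

definition Tlaw :: "'a measure \<Rightarrow> (nat \<Rightarrow> 'a measure) \<Rightarrow> ('a \<Rightarrow> (nat \<Rightarrow> 'a) \<Rightarrow> real) \<Rightarrow> real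
    \<Rightarrow> (nat list \<Rightarrow> real) \<Rightarrow> nat \<Rightarrow> (nat \<Rightarrow> nat set) \<Rightarrow> nat \<Rightarrow> (nat \<Rightarrow> real) measure" where
  "Tlaw M Q SS eps A L I n =
     distr (PiM {1..n} Q \<Otimes>\<^sub>M PiM {1..n} (\<lambda>_. std_normal_measure)) (out_space L) (Tstat SS eps A L I)"

end

theory Submission
  imports Defs "HOL-Combinatorics.Permutations"
begin

lemma rank_le_iff:
  fixes f :: "nat \<Rightarrow> 'b::linorder"
  assumes "finite C" "inj_on f C" "i \<in> C" "j \<in> C"
  shows "card {k\<in>C. f k \<le> f j} \<le> card {k\<in>C. f k \<le> f i} \<longleftrightarrow> f j \<le> f i"
proof
  assume "f j \<le> f i"
  then show "card {k\<in>C. f k \<le> f j} \<le> card {k\<in>C. f k \<le> f i}"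
    using assms by (intro card_mono) auto
next
  assume h: "card {k\<in>C. f k \<le> f j} \<le> card {k\<in>C. f k \<le> f i}"
  show "f j \<le> f i"
  proof (rule ccontr)
    assume "\<not> f j \<le> f i"
    then have "{k\<in>C. f k \<le> f i} \<subset> {k\<in>C. f k \<le> f j}" using assms by auto
    then have "card {k\<in>C. f k \<le> f i} < card {k\<in>C. f k \<le> f j}"
      using assms by (intro psubset_card_mono) auto
    with h show False by simp
  qed
qed

lemma rank_inj:
  fixes f :: "nat \<Rightarrow> 'b::linorder"
  assumes "finite C" "inj_on f C"
  shows "inj_on (\<lambda>i. card {k\<in>C. f k \<le> f i}) C"
proof (rule inj_onI)
  fix i j assume ij: "i \<in> C" "j \<in> C" "card {k\<in>C. f k \<le> f i} = card {k\<in>C. f k \<le> f j}"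
  have "f j \<le> f i" using rank_le_iff[OF assms ij(1) ij(2)] ij(3) by simp
  moreover have "f i \<le> f j" using rank_le_iff[OF assms ij(2) ij(1)] ij(3) by simp
  ultimately have "f i = f j" by simp
  then show "i = j" using assms(2) ij(1,2) inj_onD by metis
qed

lemma rank_image:
  fixes f :: "nat \<Rightarrow> 'b::linorder"
  assumes "finite C" "inj_on f C"
  shows "(\<lambda>i. card {k\<in>C. f k \<le> f i}) ` C = {1..card C}"
proof -
  have sub: "(\<lambda>i. card {k\<in>C. f k \<le> f i}) ` C \<subseteq> {1..card C}"
  proof
    fix y assume "y \<in> (\<lambda>i. card {k\<in>C. f k \<le> f i}) ` C"
    then obtain i where i: "i \<in> C" "y = card {k\<in>C. f k \<le> f i}" by auto
    have "{k\<in>C. f k \<le> f i} \<noteq> {}" using i by auto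
    then have "y \<ge> 1" using i assms by (simp add: Suc_le_eq card_gt_0_iff)
    moreover have "y \<le> card C" using i assms by (auto intro: card_mono)
    ultimately show "y \<in> {1..card C}" by simp
  qed
  have "card ((\<lambda>i. card {k\<in>C. f k \<le> f i}) ` C) = card C"
    using card_image[OF rank_inj[OF assms]] .
  then show ?thesis using sub by (intro card_subset_eq) auto
qed

definition blk :: "nat set \<Rightarrow> (nat \<Rightarrow> 'b) \<Rightarrow> nat \<Rightarrow> nat set" where
  "blk S b i = {j\<in>S. b j = b i}"
definition nu :: "nat set \<Rightarrow> (nat \<Rightarrow> 'b) \<Rightarrow> (nat \<Rightarrow> nat) \<Rightarrow> nat \<Rightarrow> nat" where
  "nu S b p i = card {j\<in>blk S b i. p j \<le> p i}"
definition Grp :: "nat set \<Rightarrow> (nat \<Rightarrow> 'b) \<Rightarrow> (nat \<Rightarrow> nat) set" where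
  "Grp S b = {s. s permutes S \<and> (\<forall>i\<in>S. b (s i) = b i)}"

lemma blk_same: "x \<in> blk S b i \<Longrightarrow> blk S b x = blk S b i"
  by (auto simp: blk_def)

lemma nu_blk:
  assumes "finite S" "inj_on p S" "i \<in> S"
  shows "inj_on (nu S b p) (blk S b i)" "nu S b p ` blk S b i = {1..card (blk S b i)}"
proof -
  have fin: "finite (blk S b i)" and inj: "inj_on p (blk S b i)"
    using assms by (auto simp: blk_def intro: inj_on_subset)
  have eq: "\<And>x. x \<in> blk S b i \<Longrightarrow> nu S b p x = card {k\<in>blk S b i. p k \<le> p x}"
    unfolding nu_def using blk_same by metis
  show "inj_on (nu S b p) (blk S b i)"
    using rank_inj[OF fin inj] eq by (simp add: inj_on_def)
  show "nu S b p ` blk S b i = {1..card (blk S b i)}"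
    using rank_image[OF fin inj] eq by (metis (no_types, lifting) image_cong)
qed

lemma nu_le_iff:
  assumes "finite S" "inj_on p S" "i \<in> S" "j \<in> S" "b i = b j"
  shows "nu S b p j \<le> nu S b p i \<longleftrightarrow> p j \<le> p i"
proof -
  have fin: "finite (blk S b i)" and inj: "inj_on p (blk S b i)"
    using assms by (auto simp: blk_def intro: inj_on_subset)
  have "blk S b j = blk S b i" using assms by (auto simp: blk_def)
  then show ?thesis unfolding nu_def using rank_le_iff[OF fin inj, of i j] assms
    by (auto simp: blk_def)
qed

lemma exists_g:
  assumes fin: "finite S" and rho: "rho permutes S"
  shows "\<exists>g\<in>Grp S b. \<forall>i\<in>S. nu S b rho (g i) = nu S b id i"
proof -
  have injr: "inj_on rho S" using rho permutes_inj inj_on_subset by blast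
  have injid: "inj_on id S" by simp
  define g where "g i = (if i \<in> S then the_inv_into (blk S b i) (nu S b rho) (nu S b id i) else i)" for i
  have gi: "g i \<in> blk S b i \<and> nu S b rho (g i) = nu S b id i" if i: "i \<in> S" for i
  proof -
    have ii: "i \<in> blk S b i" using i by (simp add: blk_def)
    have y: "nu S b id i \<in> nu S b rho ` blk S b i"
      using nu_blk(2)[OF fin injr i] nu_blk(2)[OF fin injid i] ii by blast
    have "g i = the_inv_into (blk S b i) (nu S b rho) (nu S b id i)" using i by (simp add: g_def)
    then show ?thesis using the_inv_into_into[OF nu_blk(1)[OF fin injr i] y order_refl]
        f_the_inv_into_f[OF nu_blk(1)[OF fin injr i] y] by simp
  qed
  have gS: "g ` S \<subseteq> S" using gi by (auto simp: blk_def)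
  have gb: "b (g i) = b i" if "i \<in> S" for i using gi[OF that] by (simp add: blk_def)
  have ginj: "inj_on g S"
  proof (rule inj_onI)
    fix i j assume ij: "i \<in> S" "j \<in> S" "g i = g j"
    have bij: "b i = b j" using gb[OF ij(1)] gb[OF ij(2)] ij(3) by simp
    have "nu S b id i = nu S b id j" using gi[OF ij(1)] gi[OF ij(2)] ij(3) by simp
    moreover have "j \<in> blk S b i" using ij bij by (simp add: blk_def)
    moreover have "i \<in> blk S b i" using ij by (simp add: blk_def)
    ultimately show "i = j" using nu_blk(1)[OF fin injid ij(1)] inj_onD by metis
  qed
  have "g ` S = S" using endo_inj_surj[OF fin gS ginj] .
  then have "bij_betw g S S" using ginj by (simp add: bij_betw_def)
  then have "g permutes S" by (rule bij_imp_permutes) (simp add: g_def)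
  then have "g \<in> Grp S b" using gb by (simp add: Grp_def)
  then show ?thesis using gi by blast
qed

lemma Grp_shift:
  assumes g: "g \<in> Grp S b"
  shows "(\<Sum>s\<in>Grp S b. F (g \<circ> s)) = (\<Sum>s\<in>Grp S b. F s)"
proof (rule sum.reindex_bij_witness[where i="\<lambda>s. inv g \<circ> s" and j="\<lambda>s. g \<circ> s"])
  have gp: "g permutes S" using g by (simp add: Grp_def)
  have gb: "\<forall>i\<in>S. b (g i) = b i" using g by (simp add: Grp_def)
  have ginvb: "b (inv g i) = b i" if "i \<in> S" for i
  proof -
    have "inv g i \<in> S" using permutes_in_image[OF permutes_inv[OF gp]] that by simp
    then have "b (g (inv g i)) = b (inv g i)" using gb by blast
    then show ?thesis using permutes_inverses(1)[OF gp] by simp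
  qed
  fix s assume s: "s \<in> Grp S b"
  then have sp: "s permutes S" and sb: "\<forall>i\<in>S. b (s i) = b i" by (auto simp: Grp_def)
  show "inv g \<circ> (g \<circ> s) = s" using permutes_inverses(2)[OF gp] by (auto simp: fun_eq_iff)
  show "g \<circ> (inv g \<circ> s) = s" using permutes_inverses(1)[OF gp] by (auto simp: fun_eq_iff)
  show "inv g \<circ> s \<in> Grp S b"
    unfolding Grp_def using permutes_compose[OF sp permutes_inv[OF gp]] sb ginvb permutes_in_image[OF sp]
    by auto
  show "g \<circ> s \<in> Grp S b"
    unfolding Grp_def using permutes_compose[OF sp gp] sb gb permutes_in_image[OF sp]
    by auto
  show "F (g \<circ> s) = F (g \<circ> s)" by simp
qed


lemma Gmap_shift:
  assumes fin: "finite S" and rho: "rho permutes S" and g: "g \<in> Grp S b"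
    and gnu: "\<forall>i\<in>S. nu S b rho (g i) = nu S b id i" and s: "s \<in> Grp S b"
    and Hl: "\<forall>l\<in>{1..L}. I l \<subseteq> S \<and> (\<forall>i\<in>I l. \<forall>j\<in>I l. b i = b j)"
  shows "Gmap A L I (rho \<circ> (g \<circ> s)) = Gmap A L I s"
proof -
  have injr: "inj_on rho S" using rho permutes_inj inj_on_subset by blast
  have injid: "inj_on id S" by simp
  have gp: "g permutes S" and gb: "\<And>i. i \<in> S \<Longrightarrow> b (g i) = b i" using g unfolding Grp_def by blast+
  have sp: "s permutes S" and sb: "\<And>i. i \<in> S \<Longrightarrow> b (s i) = b i" using s unfolding Grp_def by blast+
  have key: "rho (g (s j)) \<le> rho (g (s i)) \<longleftrightarrow> s j \<le> s i"
    if l: "l \<in> {1..L}" and i: "i \<in> I l" and j: "j \<in> I l" for l i j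
  proof -
    have iS: "i \<in> S" and jS: "j \<in> S" and bij: "b i = b j" using Hl l i j by blast+
    define a where "a = s i"
    define c where "c = s j"
    have aS: "a \<in> S" and cS: "c \<in> S" unfolding a_def c_def
      by (simp_all add: permutes_in_image[OF sp] iS jS)
    have bac: "b a = b c" unfolding a_def c_def using sb[OF iS] sb[OF jS] bij by simp
    have gaS: "g a \<in> S" and gcS: "g c \<in> S" by (simp_all add: permutes_in_image[OF gp] aS cS)
    have bg: "b (g a) = b (g c)" using gb[OF aS] gb[OF cS] bac by simp
    have "rho (g c) \<le> rho (g a) \<longleftrightarrow> nu S b rho (g c) \<le> nu S b rho (g a)"
      using nu_le_iff[OF fin injr gaS gcS bg] by simp
    also have "\<dots> \<longleftrightarrow> nu S b id c \<le> nu S b id a" using gnu aS cS by simp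
    also have "\<dots> \<longleftrightarrow> c \<le> a" using nu_le_iff[OF fin injid aS cS bac] by simp
    finally show ?thesis unfolding a_def c_def .
  qed
  show ?thesis
    unfolding Gmap_def
  proof (rule restrict_ext)
    fix l assume l: "l \<in> {1..L}"
    have finl: "finite (I l)" using Hl l fin finite_subset by blast
    show "A (map (\<lambda>i. card {j \<in> I l. (rho \<circ> (g \<circ> s)) j \<le> (rho \<circ> (g \<circ> s)) i}) (sorted_list_of_set (I l))) =
          A (map (\<lambda>i. card {j \<in> I l. s j \<le> s i}) (sorted_list_of_set (I l)))"
    proof (rule arg_cong[where f=A], rule map_cong[OF refl])
      fix i assume "i \<in> set (sorted_list_of_set (I l))"
      then have i: "i \<in> I l" using finl by simp
      have "{j \<in> I l. (rho \<circ> (g \<circ> s)) j \<le> (rho \<circ> (g \<circ> s)) i} = {j \<in> I l. s j \<le> s i}"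
        using key[OF l i] by auto
      then show "card {j \<in> I l. (rho \<circ> (g \<circ> s)) j \<le> (rho \<circ> (g \<circ> s)) i} = card {j \<in> I l. s j \<le> s i}"
        by simp
    qed
  qed
qed

lemma sum_Grp_invariant:
  assumes fin: "finite S" and rho: "rho permutes S"
    and Hl: "\<forall>l\<in>{1..L}. I l \<subseteq> S \<and> (\<forall>i\<in>I l. \<forall>j\<in>I l. b i = b j)"
  shows "(\<Sum>s\<in>Grp S b. h (Gmap A L I (rho \<circ> s))) = (\<Sum>s\<in>Grp S b. h (Gmap A L I s))"
proof -
  obtain g where g: "g \<in> Grp S b" and gnu: "\<forall>i\<in>S. nu S b rho (g i) = nu S b id i"
    using exists_g[OF fin rho] by blast
  have "(\<Sum>s\<in>Grp S b. h (Gmap A L I (rho \<circ> s))) = (\<Sum>s\<in>Grp S b. h (Gmap A L I (rho \<circ> (g \<circ> s))))"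
    using Grp_shift[OF g, of "\<lambda>s. h (Gmap A L I (rho \<circ> s))"] by simp
  also have "\<dots> = (\<Sum>s\<in>Grp S b. h (Gmap A L I s))"
    using Gmap_shift[OF fin rho g gnu _ Hl] by simp
  finally show ?thesis .
qed

lemma Grp_finite: "finite S \<Longrightarrow> finite (Grp S b)"
  by (rule finite_subset[OF _ finite_permutations]) (auto simp: Grp_def)

lemma id_Grp: "id \<in> Grp S b"
  by (simp add: Grp_def permutes_id)

lemma count_perms:
  assumes fin: "finite S"
    and Hl: "\<forall>l\<in>{1..L}. I l \<subseteq> S \<and> (\<forall>i\<in>I l. \<forall>j\<in>I l. b i = b j)"
  shows "card (Grp S b) * card {p\<in>{p. p permutes S}. Gmap A L I p \<in> B}
     = card {p. p permutes S} * card {s\<in>Grp S b. Gmap A L I s \<in> B}"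
proof -
  define f where "f p = (if Gmap A L I p \<in> B then 1 else 0::nat)" for p
  have cP: "card {p\<in>{p. p permutes S}. Gmap A L I p \<in> B} = (\<Sum>p\<in>{p. p permutes S}. f p)"
    unfolding f_def by (simp add: sum.If_cases finite_permutations[OF fin] Int_def)
  have cG: "card {s\<in>Grp S b. Gmap A L I s \<in> B} = (\<Sum>s\<in>Grp S b. f s)"
    unfolding f_def by (simp add: sum.If_cases Grp_finite[OF fin] Int_def)
  have "card (Grp S b) * (\<Sum>p\<in>{p. p permutes S}. f p) = (\<Sum>s\<in>Grp S b. \<Sum>p\<in>{p. p permutes S}. f p)"
    by simp
  also have "\<dots> = (\<Sum>s\<in>Grp S b. \<Sum>p\<in>{p. p permutes S}. f (p \<circ> s))"
  proof (rule sum.cong[OF refl])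
    fix s assume "s \<in> Grp S b"
    then have "s permutes S" by (simp add: Grp_def)
    then show "(\<Sum>p\<in>{p. p permutes S}. f p) = (\<Sum>p\<in>{p. p permutes S}. f (p \<circ> s))"
      by (rule sum_permutations_compose_right)
  qed
  also have "\<dots> = (\<Sum>p\<in>{p. p permutes S}. \<Sum>s\<in>Grp S b. f (p \<circ> s))"
    by (rule sum.swap)
  also have "\<dots> = (\<Sum>p\<in>{p. p permutes S}. \<Sum>s\<in>Grp S b. f s)"
  proof (rule sum.cong[OF refl])
    fix p assume "p \<in> {p. p permutes S}"
    then show "(\<Sum>s\<in>Grp S b. f (p \<circ> s)) = (\<Sum>s\<in>Grp S b. f s)"
      unfolding f_def using sum_Grp_invariant[OF fin _ Hl, of p "\<lambda>x. if x \<in> B then 1 else 0"] by simp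
  qed
  also have "\<dots> = card {p. p permutes S} * (\<Sum>s\<in>Grp S b. f s)" by simp
  finally show ?thesis using cP cG by simp
qed

lemma pred_card_le:
  fixes f :: "nat \<Rightarrow> 'm \<Rightarrow> real"
  assumes J: "finite J" and fm: "\<And>j. j \<in> insert x J \<Longrightarrow> f j \<in> borel_measurable M"
  shows "{\<omega>\<in>space M. card {j\<in>J. f j \<omega> \<le> f x \<omega>} = m} \<in> sets M"
proof -
  have eq: "{\<omega>\<in>space M. card {j\<in>J. f j \<omega> \<le> f x \<omega>} = m} =
     {\<omega>\<in>space M. \<exists>J'\<in>{J'. J' \<subseteq> J \<and> card J' = m}. \<forall>j\<in>J. (f j \<omega> \<le> f x \<omega>) = (j \<in> J')}"
  proof (intro Collect_cong conj_cong refl iffI)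
    fix \<omega> assume "card {j\<in>J. f j \<omega> \<le> f x \<omega>} = m"
    then show "\<exists>J'\<in>{J'. J' \<subseteq> J \<and> card J' = m}. \<forall>j\<in>J. (f j \<omega> \<le> f x \<omega>) = (j \<in> J')"
      by (intro bexI[of _ "{j\<in>J. f j \<omega> \<le> f x \<omega>}"]) auto
  next
    fix \<omega> assume "\<exists>J'\<in>{J'. J' \<subseteq> J \<and> card J' = m}. \<forall>j\<in>J. (f j \<omega> \<le> f x \<omega>) = (j \<in> J')"
    then obtain J' where "J' \<subseteq> J" "card J' = m" "\<forall>j\<in>J. (f j \<omega> \<le> f x \<omega>) = (j \<in> J')" by blast
    then have "{j\<in>J. f j \<omega> \<le> f x \<omega>} = J'" by auto
    then show "card {j\<in>J. f j \<omega> \<le> f x \<omega>} = m" using \<open>card J' = m\<close> by simp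
  qed
  have finJ': "finite {J'. J' \<subseteq> J \<and> card J' = m}" using J by simp
  have "{\<omega>\<in>space M. \<exists>J'\<in>{J'. J' \<subseteq> J \<and> card J' = m}. \<forall>j\<in>J. (f j \<omega> \<le> f x \<omega>) = (j \<in> J')} \<in> sets M"
  proof (intro sets.sets_Collect_finite_Ex sets.sets_Collect_finite_All finJ' J)
    fix J' j assume "j \<in> J"
    then have [measurable]: "f j \<in> borel_measurable M" "f x \<in> borel_measurable M" using fm by auto
    show "{\<omega>\<in>space M. (f j \<omega> \<le> f x \<omega>) = (j \<in> J')} \<in> sets M" by measurable
  qed
  then show ?thesis unfolding eq by simp
qed

lemma map_card_measurable:
  fixes f :: "nat \<Rightarrow> 'm \<Rightarrow> real"
  assumes J: "finite J" and fm: "\<And>j. j \<in> K \<Longrightarrow> f j \<in> borel_measurable M" and JK: "J \<subseteq> K"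
  shows "set xs \<subseteq> K \<Longrightarrow> {\<omega>\<in>space M. map (\<lambda>i. card {j\<in>J. f j \<omega> \<le> f i \<omega>}) xs = v} \<in> sets M"
proof (induction xs arbitrary: v)
  case Nil
  then show ?case by (cases v) auto
next
  case (Cons x xs)
  show ?case
  proof (cases v)
    case Nil
    then show ?thesis by simp
  next
    case (Cons y vs)
    have "{\<omega>\<in>space M. map (\<lambda>i. card {j\<in>J. f j \<omega> \<le> f i \<omega>}) (x # xs) = v} =
      {\<omega>\<in>space M. card {j\<in>J. f j \<omega> \<le> f x \<omega>} = y} \<inter> {\<omega>\<in>space M. map (\<lambda>i. card {j\<in>J. f j \<omega> \<le> f i \<omega>}) xs = vs}"
      using Cons by auto
    moreover have "{\<omega>\<in>space M. card {j\<in>J. f j \<omega> \<le> f x \<omega>} = y} \<in> sets M"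
      using pred_card_le[OF J, of x f M y] fm JK Cons.prems by (meson insert_subset list.set_intros(1) subset_iff)
    moreover have "{\<omega>\<in>space M. map (\<lambda>i. card {j\<in>J. f j \<omega> \<le> f i \<omega>}) xs = vs} \<in> sets M"
      using Cons.IH Cons.prems by simp
    ultimately show ?thesis by simp
  qed
qed

lemma map_card_measurable':
  fixes f :: "nat \<Rightarrow> 'm \<Rightarrow> real"
  assumes J: "finite J" and fm: "\<And>j. j \<in> J \<Longrightarrow> f j \<in> borel_measurable M"
  shows "(\<lambda>\<omega>. A (map (\<lambda>i. card {j\<in>J. f j \<omega> \<le> f i \<omega>}) (sorted_list_of_set J))) \<in> borel_measurable M"
proof -
  have "(\<lambda>\<omega>. map (\<lambda>i. card {j\<in>J. f j \<omega> \<le> f i \<omega>}) (sorted_list_of_set J)) \<in> M \<rightarrow>\<^sub>M count_space UNIV"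
    unfolding measurable_count_space_eq2_countable
    using map_card_measurable[OF J fm order_refl] J by (simp add: Int_def conj_commute)
  moreover have "A \<in> count_space UNIV \<rightarrow>\<^sub>M borel" by simp
  ultimately show ?thesis by (rule measurable_compose)
qed

lemma sets_N: "sets std_normal_measure = sets borel"
  by (simp add: std_normal_measure_def)
lemma space_N: "space std_normal_measure = UNIV"
  by (simp add: std_normal_measure_def)
lemma prob_N: "prob_space std_normal_measure"
  unfolding std_normal_measure_def by (rule prob_space_normal_density) simp
lemma AE_N: "AE y in std_normal_measure. y \<noteq> c"
  unfolding std_normal_measure_def
  by (subst AE_density) (auto intro: AE_mp[OF AE_lborel_singleton[of c]])

lemma AE_PiM_N:
  assumes K: "finite K" "i \<notin> K" "j \<in> K"
  shows "AE e in PiM (insert i K) (\<lambda>_. std_normal_measure). e i \<noteq> e j + d"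
proof -
  interpret N: prob_space std_normal_measure by (rule prob_N)
  interpret P: product_sigma_finite "\<lambda>_. std_normal_measure"
    unfolding product_sigma_finite_def using N.sigma_finite_measure_axioms by simp
  define X where "X = {e\<in>space (PiM (insert i K) (\<lambda>_. std_normal_measure)). e i = e j + d}"
  have seq: "sets (PiM (insert i K) (\<lambda>_. std_normal_measure)) = sets (PiM (insert i K) (\<lambda>_. borel :: real measure))"
    by (rule sets_PiM_cong) (simp_all add: sets_N)
  have speq: "space (PiM (insert i K) (\<lambda>_. std_normal_measure)) = space (PiM (insert i K) (\<lambda>_. borel :: real measure))"
    using sets_eq_imp_space_eq[OF seq] .
  have ii: "i \<in> insert i K" and jj: "j \<in> insert i K" using K by auto
  have "{e\<in>space (PiM (insert i K) (\<lambda>_. borel :: real measure)). e i = e j + d} \<in> sets (PiM (insert i K) (\<lambda>_. borel :: real measure))"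
    using ii jj by measurable
  then have Xs: "X \<in> sets (PiM (insert i K) (\<lambda>_. std_normal_measure))"
    unfolding X_def seq speq .
  have "emeasure (PiM (insert i K) (\<lambda>_. std_normal_measure)) X
      = (\<integral>\<^sup>+ e. indicator X e \<partial>PiM (insert i K) (\<lambda>_. std_normal_measure))"
    using Xs by simp
  also have "\<dots> = (\<integral>\<^sup>+ x. (\<integral>\<^sup>+ y. indicator X (x(i := y)) \<partial>std_normal_measure) \<partial>PiM K (\<lambda>_. std_normal_measure))"
    using Xs K by (intro P.product_nn_integral_insert) auto
  also have "\<dots> = (\<integral>\<^sup>+ x. 0 \<partial>PiM K (\<lambda>_. std_normal_measure))"
  proof (rule nn_integral_cong)
    fix x assume x: "x \<in> space (PiM K (\<lambda>_. std_normal_measure))"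
    have "(\<integral>\<^sup>+ y. indicator X (x(i := y)) \<partial>std_normal_measure)
        = (\<integral>\<^sup>+ y. indicator {x j + d} y \<partial>std_normal_measure)"
    proof (rule nn_integral_cong)
      fix y
      have "x(i := y) \<in> space (PiM (insert i K) (\<lambda>_. std_normal_measure))"
        using x by (auto simp: space_PiM space_N PiE_def extensional_def)
      then show "indicator X (x(i := y)) = (indicator {x j + d} y :: ennreal)"
        using K by (auto simp: X_def indicator_def)
    qed
    also have "\<dots> = emeasure std_normal_measure {x j + d}"
      by (simp add: sets_N)
    also have "\<dots> = 0" unfolding std_normal_measure_def
      by (subst emeasure_density) (auto intro!: nn_integral_null_set simp: null_sets_def)
    finally show "(\<integral>\<^sup>+ y. indicator X (x(i := y)) \<partial>std_normal_measure) = 0" .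
  qed
  also have "\<dots> = 0" by simp
  finally have "emeasure (PiM (insert i K) (\<lambda>_. std_normal_measure)) X = 0" .
  then show ?thesis
    by (subst AE_iff_measurable[OF Xs]) (auto simp: X_def)
qed

locale cpset =
  fixes M :: "'a measure" and Q :: "nat \<Rightarrow> 'a measure" and SS :: "'a \<Rightarrow> (nat \<Rightarrow> 'a) \<Rightarrow> real"
    and eps :: real and A :: "nat list \<Rightarrow> real" and n L :: nat and I :: "nat \<Rightarrow> nat set"
  assumes eps_pos: "eps > 0"
    and SS_meas: "(\<lambda>(z, D). SS z D) \<in> M \<Otimes>\<^sub>M PiM {1..n} (\<lambda>_. M) \<rightarrow>\<^sub>M borel"
    and SS_sym: "\<And>z D \<pi>. z \<in> space M \<Longrightarrow> D \<in> space (PiM {1..n} (\<lambda>_. M)) \<Longrightarrow>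
                   \<pi> permutes {1..n} \<Longrightarrow> SS z D = SS z (\<lambda>j. D (\<pi> j))"
    and I_sub: "\<And>l. l \<in> {1..L} \<Longrightarrow> I l \<subseteq> {1..n}"
    and Qp: "\<And>i. i \<in> {1..n} \<Longrightarrow> prob_space (Q i)"
    and Qs: "\<And>i. i \<in> {1..n} \<Longrightarrow> sets (Q i) = sets M"
    and Hq: "\<And>l i j. l \<in> {1..L} \<Longrightarrow> i \<in> I l \<Longrightarrow> j \<in> I l \<Longrightarrow> Q i = Q j"
begin

definition "Om = PiM {1..n} Q \<Otimes>\<^sub>M PiM {1..n} (\<lambda>_. std_normal_measure)"
definition "Om0 = PiM {1..n} (\<lambda>_. M) \<Otimes>\<^sub>M PiM {1..n} (\<lambda>_. borel :: real measure)"
definition "sc \<omega> = score SS eps (fst \<omega>) (snd \<omega>)"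

lemma sets_Om: "sets Om = sets Om0"
  unfolding Om_def Om0_def
  by (intro sets_pair_measure_cong sets_PiM_cong) (simp_all add: Qs sets_N)

lemma space_Om: "space Om = space Om0"
  using sets_eq_imp_space_eq[OF sets_Om] .

lemma meas_Om: "measurable Om N = measurable Om0 N"
  by (rule measurable_cong_sets[OF sets_Om refl])

lemma sc_meas: "i \<in> {1..n} \<Longrightarrow> (\<lambda>\<omega>. sc \<omega> i) \<in> borel_measurable Om0"
  unfolding sc_def score_def Om0_def using SS_meas by measurable

lemma T_eq: "Tstat SS eps A L I = (\<lambda>\<omega>. \<lambda>l\<in>{1..L}. A (map (\<lambda>i. card {j\<in>I l. sc \<omega> j \<le> sc \<omega> i}) (sorted_list_of_set (I l))))"
  unfolding Tstat_def local_rank_def[abs_def] sc_def by (auto simp: fun_eq_iff)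

lemma T_meas0: "Tstat SS eps A L I \<in> Om0 \<rightarrow>\<^sub>M out_space L"
  unfolding T_eq out_space_def
proof (rule measurable_restrict)
  fix l assume l: "l \<in> {1..L}"
  have fin: "finite (I l)" using I_sub[OF l] finite_subset by blast
  show "(\<lambda>\<omega>. A (map (\<lambda>i. card {j\<in>I l. sc \<omega> j \<le> sc \<omega> i}) (sorted_list_of_set (I l)))) \<in> borel_measurable Om0"
    using map_card_measurable'[OF fin, of "\<lambda>j \<omega>. sc \<omega> j" Om0 A] sc_meas I_sub[OF l] by blast
qed

lemma T_meas: "Tstat SS eps A L I \<in> Om \<rightarrow>\<^sub>M out_space L"
  unfolding meas_Om by (rule T_meas0)

lemma prob_Om: "prob_space Om"
  unfolding Om_def
  by (intro prob_space_pair prob_space_PiM Qp prob_N) auto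

lemma AE_inj: "AE \<omega> in Om. inj_on (sc \<omega>) {1..n}"
proof -
  interpret P1: prob_space "PiM {1..n} Q" by (intro prob_space_PiM Qp)
  interpret P2: prob_space "PiM {1..n} (\<lambda>_. std_normal_measure)" by (intro prob_space_PiM prob_N)
  interpret PP: pair_sigma_finite "PiM {1..n} Q" "PiM {1..n} (\<lambda>_. std_normal_measure)" ..
  have "AE \<omega> in Om. \<forall>p\<in>{1..n}\<times>{1..n}. fst p \<noteq> snd p \<longrightarrow> sc \<omega> (fst p) \<noteq> sc \<omega> (snd p)"
  proof (rule AE_finite_allI)
    fix p assume p: "p \<in> {1..n}\<times>{1..n}"
    obtain i j where pij: "p = (i, j)" by (cases p)
    have i: "i \<in> {1..n}" and j: "j \<in> {1..n}" using p pij by auto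
    have [measurable]: "(\<lambda>\<omega>. sc \<omega> i) \<in> borel_measurable Om0" "(\<lambda>\<omega>. sc \<omega> j) \<in> borel_measurable Om0"
      using sc_meas i j by auto
    have "{\<omega>\<in>space Om0. i \<noteq> j \<longrightarrow> sc \<omega> i \<noteq> sc \<omega> j} \<in> sets Om0" by measurable
    then have ms: "{\<omega>\<in>space Om. i \<noteq> j \<longrightarrow> sc \<omega> i \<noteq> sc \<omega> j} \<in> sets Om"
      using sets_Om space_Om by simp
    have "AE \<omega> in Om. i \<noteq> j \<longrightarrow> sc \<omega> i \<noteq> sc \<omega> j"
      unfolding Om_def
    proof (rule PP.AE_pair_measure)
      show "{x \<in> space (Pi\<^sub>M {1..n} Q \<Otimes>\<^sub>M Pi\<^sub>M {1..n} (\<lambda>_. std_normal_measure)). i \<noteq> j \<longrightarrow> sc x i \<noteq> sc x j}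
          \<in> sets (Pi\<^sub>M {1..n} Q \<Otimes>\<^sub>M Pi\<^sub>M {1..n} (\<lambda>_. std_normal_measure))"
        using ms unfolding Om_def .
      show "AE D in Pi\<^sub>M {1..n} Q. AE e in Pi\<^sub>M {1..n} (\<lambda>_. std_normal_measure). i \<noteq> j \<longrightarrow> sc (D, e) i \<noteq> sc (D, e) j"
      proof (rule AE_I2)
        fix D
        show "AE e in Pi\<^sub>M {1..n} (\<lambda>_. std_normal_measure). i \<noteq> j \<longrightarrow> sc (D, e) i \<noteq> sc (D, e) j"
        proof (cases "i = j")
          case True then show ?thesis by simp
        next
          case False
          define d where "d = (SS (D j) D - SS (D i) D) / eps"
          have ins: "insert i ({1..n} - {i}) = {1..n}" using i by auto
          have ae0: "AE e in Pi\<^sub>M (insert i ({1..n} - {i})) (\<lambda>_. std_normal_measure). e i \<noteq> e j + d"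
            by (rule AE_PiM_N) (use j False in auto)
          then have ae: "AE e in Pi\<^sub>M {1..n} (\<lambda>_. std_normal_measure). e i \<noteq> e j + d"
            unfolding ins .
          show ?thesis
          proof (rule AE_mp[OF ae], rule AE_I2, intro impI)
            fix e assume ne: "e i \<noteq> e j + d"
            show "sc (D, e) i \<noteq> sc (D, e) j"
            proof
              assume "sc (D, e) i = sc (D, e) j"
              then have "SS (D i) D + eps * e i = SS (D j) D + eps * e j"
                by (simp add: sc_def score_def)
              then have "e i = e j + d" using eps_pos unfolding d_def by (simp add: field_simps)
              with ne show False by simp
            qed
          qed
        qed
      qed
    qed
    then show "AE \<omega> in Om. fst p \<noteq> snd p \<longrightarrow> sc \<omega> (fst p) \<noteq> sc \<omega> (snd p)" using pij by simp
  qed simp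
  then show ?thesis
    by (rule AE_mp) (auto intro!: AE_I2 simp: inj_on_def)
qed

end

context cpset begin

definition "Phi s = (\<lambda>(x, y). (restrict (\<lambda>k. x (s k)) {1..n}, restrict (\<lambda>k. y (s k)) {1..n}))"

definition "rk (f :: nat \<Rightarrow> real) i = (if i \<in> {1..n} then card {j\<in>{1..n}. f j \<le> f i} else i)"

lemma rk_perm:
  assumes inj: "inj_on f {1..n}"
  shows "rk f permutes {1..n}"
proof (rule bij_imp_permutes)
  have eq: "\<And>i. i \<in> {1..n} \<Longrightarrow> rk f i = card {j\<in>{1..n}. f j \<le> f i}" by (simp add: rk_def)
  have rinj: "inj_on (\<lambda>i. card {j\<in>{1..n}. f j \<le> f i}) {1..n}" by (rule rank_inj[OF _ inj]) simp
  have "inj_on (rk f) {1..n}"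
  proof (rule inj_onI)
    fix x y assume x: "x \<in> {1..n}" and y: "y \<in> {1..n}" and xy: "rk f x = rk f y"
    have "card {j\<in>{1..n}. f j \<le> f x} = card {j\<in>{1..n}. f j \<le> f y}"
      using xy eq[OF x] eq[OF y] by simp
    then show "x = y" using inj_onD[OF rinj _ x y] by simp
  qed
  moreover have "rk f ` {1..n} = (\<lambda>i. card {j\<in>{1..n}. f j \<le> f i}) ` {1..n}"
    using eq by (rule image_cong[OF refl])
  moreover have "(\<lambda>i. card {j\<in>{1..n}. f j \<le> f i}) ` {1..n} = {1..card {1..n}}"
    by (rule rank_image[OF _ inj]) simp
  ultimately show "bij_betw (rk f) {1..n} {1..n}" by (simp add: bij_betw_def)
  show "rk f x = x" if "x \<notin> {1..n}" for x using that unfolding rk_def by (rule if_not_P)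
qed

lemma rk_le:
  assumes inj: "inj_on f {1..n}" and a: "a \<in> {1..n}" and b: "b \<in> {1..n}"
  shows "rk f a \<le> rk f b \<longleftrightarrow> f a \<le> f b"
proof -
  have "rk f a = card {j\<in>{1..n}. f j \<le> f a}" "rk f b = card {j\<in>{1..n}. f j \<le> f b}"
    using a b by (simp_all add: rk_def)
  moreover have "card {j\<in>{1..n}. f j \<le> f a} \<le> card {j\<in>{1..n}. f j \<le> f b} \<longleftrightarrow> f a \<le> f b"
    by (rule rank_le_iff[OF _ inj b a]) simp
  ultimately show ?thesis by simp
qed

lemma f1_meas:
  assumes s: "s \<in> Grp {1..n} Q"
  shows "(\<lambda>x. restrict (\<lambda>k. x (s k)) {1..n}) \<in> PiM {1..n} Q \<rightarrow>\<^sub>M PiM {1..n} Q"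
proof (rule measurable_restrict)
  fix k assume k: "k \<in> {1..n}"
  have sp: "s permutes {1..n}" and sQ: "Q (s k) = Q k" using s k unfolding Grp_def by blast+
  have "s k \<in> {1..n}" using permutes_in_image[OF sp] k by simp
  then have "(\<lambda>x. x (s k)) \<in> PiM {1..n} Q \<rightarrow>\<^sub>M Q (s k)" by (rule measurable_component_singleton)
  then show "(\<lambda>x. x (s k)) \<in> PiM {1..n} Q \<rightarrow>\<^sub>M Q k" using sQ by simp
qed

lemma f2_meas:
  assumes s: "s \<in> Grp {1..n} Q"
  shows "(\<lambda>x. restrict (\<lambda>k. x (s k)) {1..n}) \<in> PiM {1..n} (\<lambda>_. std_normal_measure) \<rightarrow>\<^sub>M PiM {1..n} (\<lambda>_. std_normal_measure)"
proof (rule measurable_restrict)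
  fix k assume k: "k \<in> {1..n}"
  have sp: "s permutes {1..n}" using s unfolding Grp_def by blast
  have "s k \<in> {1..n}" using permutes_in_image[OF sp] k by simp
  then show "(\<lambda>x. x (s k)) \<in> PiM {1..n} (\<lambda>_. std_normal_measure) \<rightarrow>\<^sub>M std_normal_measure"
    by (rule measurable_component_singleton)
qed

lemma Phi_meas:
  assumes s: "s \<in> Grp {1..n} Q"
  shows "Phi s \<in> Om \<rightarrow>\<^sub>M Om"
proof -
  have eq: "Phi s = (\<lambda>\<omega>. (restrict (\<lambda>k. fst \<omega> (s k)) {1..n}, restrict (\<lambda>k. snd \<omega> (s k)) {1..n}))"
    by (auto simp: Phi_def fun_eq_iff)
  show ?thesis unfolding eq Om_def
    by (intro measurable_Pair measurable_compose[OF measurable_fst f1_meas[OF s]]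
        measurable_compose[OF measurable_snd f2_meas[OF s]])
qed

lemma Phi_distr:
  assumes s: "s \<in> Grp {1..n} Q"
  shows "distr Om Om (Phi s) = Om"
proof -
  have sp: "s permutes {1..n}" and sQ: "\<And>k. k \<in> {1..n} \<Longrightarrow> Q (s k) = Q k" using s unfolding Grp_def by blast+
  have injs: "inj_on s {1..n}" using sp permutes_inj inj_on_subset by blast
  have fs: "s \<in> {1..n} \<rightarrow> {1..n}" using permutes_in_image[OF sp] by simp
  have d1: "distr (PiM {1..n} Q) (PiM {1..n} Q) (\<lambda>x. restrict (\<lambda>k. x (s k)) {1..n}) = PiM {1..n} Q"
  proof -
    have pq: "PiM {1..n} (\<lambda>i. Q (s i)) = PiM {1..n} Q" by (rule PiM_cong) (simp_all add: sQ)
    show ?thesis using distr_PiM_reindex[of "{1..n}" Q s "{1..n}", OF Qp injs fs] unfolding pq .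
  qed
  have d2: "distr (PiM {1..n} (\<lambda>_. std_normal_measure)) (PiM {1..n} (\<lambda>_. std_normal_measure)) (\<lambda>x. restrict (\<lambda>k. x (s k)) {1..n}) = PiM {1..n} (\<lambda>_. std_normal_measure)"
    using distr_PiM_reindex[of "{1..n}" "\<lambda>_. std_normal_measure" s "{1..n}", OF prob_N injs fs] by simp
  interpret P2: prob_space "PiM {1..n} (\<lambda>_. std_normal_measure)" by (intro prob_space_PiM prob_N)
  have sf: "sigma_finite_measure (distr (PiM {1..n} (\<lambda>_. std_normal_measure)) (PiM {1..n} (\<lambda>_. std_normal_measure)) (\<lambda>x. restrict (\<lambda>k. x (s k)) {1..n}))"
    unfolding d2 by (rule P2.sigma_finite_measure_axioms)
  have "distr (PiM {1..n} Q) (PiM {1..n} Q) (\<lambda>x. restrict (\<lambda>k. x (s k)) {1..n}) \<Otimes>\<^sub>M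
        distr (PiM {1..n} (\<lambda>_. std_normal_measure)) (PiM {1..n} (\<lambda>_. std_normal_measure)) (\<lambda>x. restrict (\<lambda>k. x (s k)) {1..n})
      = distr Om Om (Phi s)"
    unfolding Om_def Phi_def by (rule pair_measure_distr[OF f1_meas[OF s] f2_meas[OF s] sf])
  then show ?thesis unfolding d1 d2 Om_def by simp
qed

lemma T_Phi:
  assumes om: "\<omega> \<in> space Om" and inj: "inj_on (sc \<omega>) {1..n}" and s: "s \<in> Grp {1..n} Q"
  shows "Tstat SS eps A L I (Phi s \<omega>) = Gmap A L I (rk (sc \<omega>) \<circ> s)"
proof -
  obtain D e where De: "\<omega> = (D, e)" by (cases \<omega>)
  have sp: "s permutes {1..n}" using s unfolding Grp_def by blast
  have D: "D \<in> space (PiM {1..n} Q)" using om De by (simp add: Om_def space_pair_measure)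
  have spQ: "\<And>i. i \<in> {1..n} \<Longrightarrow> space (Q i) = space M" using Qs sets_eq_imp_space_eq by blast
  have DM: "D \<in> space (PiM {1..n} (\<lambda>_. M))" using D spQ by (simp add: space_PiM PiE_def Pi_def)
  have Dext: "D k = undefined" if "k \<notin> {1..n}" for k using D that by (auto simp: space_PiM PiE_def extensional_def)
  have Dr: "restrict (\<lambda>k. D (s k)) {1..n} = (\<lambda>k. D (s k))"
  proof
    fix k show "restrict (\<lambda>k. D (s k)) {1..n} k = D (s k)"
      using Dext permutes_not_in[OF sp] by (cases "k \<in> {1..n}") auto
  qed
  have scP: "sc (Phi s \<omega>) i = sc \<omega> (s i)" if i: "i \<in> {1..n}" for i
  proof -
    have si: "s i \<in> {1..n}" using permutes_in_image[OF sp] i by simp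
    have "D (s i) \<in> space M" using DM si by (auto simp: space_PiM PiE_def Pi_def)
    then have "SS (D (s i)) (\<lambda>k. D (s k)) = SS (D (s i)) D" using SS_sym[OF _ DM sp] by simp
    then show ?thesis using i Dr by (simp add: sc_def score_def Phi_def De)
  qed
  show ?thesis
    unfolding T_eq Gmap_def
  proof (rule restrict_ext)
    fix l assume l: "l \<in> {1..L}"
    have finl: "finite (I l)" using I_sub[OF l] finite_subset by blast
    show "A (map (\<lambda>i. card {j \<in> I l. sc (Phi s \<omega>) j \<le> sc (Phi s \<omega>) i}) (sorted_list_of_set (I l))) =
          A (map (\<lambda>i. card {j \<in> I l. (rk (sc \<omega>) \<circ> s) j \<le> (rk (sc \<omega>) \<circ> s) i}) (sorted_list_of_set (I l)))"
    proof (rule arg_cong[where f=A], rule map_cong[OF refl])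
      fix i assume "i \<in> set (sorted_list_of_set (I l))"
      then have i: "i \<in> I l" using finl by simp
      have "{j \<in> I l. sc (Phi s \<omega>) j \<le> sc (Phi s \<omega>) i} = {j \<in> I l. (rk (sc \<omega>) \<circ> s) j \<le> (rk (sc \<omega>) \<circ> s) i}"
      proof (rule Collect_cong, rule conj_cong[OF refl])
        fix j assume j: "j \<in> I l"
        have iS: "i \<in> {1..n}" and jS: "j \<in> {1..n}" using I_sub[OF l] i j by auto
        have "s i \<in> {1..n}" "s j \<in> {1..n}" using permutes_in_image[OF sp] iS jS by auto
        then show "sc (Phi s \<omega>) j \<le> sc (Phi s \<omega>) i \<longleftrightarrow> (rk (sc \<omega>) \<circ> s) j \<le> (rk (sc \<omega>) \<circ> s) i"
          using scP[OF iS] scP[OF jS] rk_le[OF inj] by simp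
      qed
      then show "card {j \<in> I l. sc (Phi s \<omega>) j \<le> sc (Phi s \<omega>) i} = card {j \<in> I l. (rk (sc \<omega>) \<circ> s) j \<le> (rk (sc \<omega>) \<circ> s) i}"
        by simp
    qed
  qed
qed

end

lemma ennreal_nat_cancel:
  fixes x y :: ennreal
  assumes k: "k > 0" and eq: "of_nat k * x = of_nat k * y"
  shows "x = y"
proof -
  have nz: "(of_nat k :: ennreal) \<noteq> 0" and nt: "(of_nat k :: ennreal) \<noteq> top" using k by auto
  have "x = (x * of_nat k) / of_nat k" using ennreal_mult_divide_eq[OF nz nt] by simp
  also have "\<dots> = (y * of_nat k) / of_nat k" using eq by (simp add: mult.commute)
  also have "\<dots> = y" using ennreal_mult_divide_eq[OF nz nt] by simp
  finally show ?thesis .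
qed

lemma sum_indicator_card:
  assumes "finite X"
  shows "(\<Sum>s\<in>X. indicator B (g s) :: ennreal) = of_nat (card {s\<in>X. g s \<in> B})"
proof -
  have "(\<Sum>s\<in>X. indicator B (g s) :: ennreal) = (\<Sum>s\<in>X. of_nat (if g s \<in> B then 1 else 0))"
    by (intro sum.cong) (auto simp: indicator_def)
  also have "\<dots> = of_nat (\<Sum>s\<in>X. (if g s \<in> B then 1 else 0))" by (simp only: of_nat_sum)
  also have "(\<Sum>s\<in>X. (if g s \<in> B then 1 else 0::nat)) = card {s\<in>X. g s \<in> B}"
    using assms by (simp add: sum.If_cases Int_def)
  finally show ?thesis .
qed

context cpset begin

lemma Hl: "\<forall>l\<in>{1..L}. I l \<subseteq> {1..n} \<and> (\<forall>i\<in>I l. \<forall>j\<in>I l. Q i = Q j)"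
  using I_sub Hq by blast

lemma key_T:
  assumes B: "B \<in> sets (out_space L)"
  shows "of_nat (card (Grp {1..n} Q)) * emeasure Om (Tstat SS eps A L I -` B \<inter> space Om)
       = of_nat (card {s\<in>Grp {1..n} Q. Gmap A L I s \<in> B})"
proof -
  let ?G = "Grp {1..n} Q"
  let ?T = "Tstat SS eps A L I"
  let ?P = "emeasure Om (?T -` B \<inter> space Om)"
  interpret Om: prob_space Om by (rule prob_Om)
  have finG: "finite ?G" by (rule Grp_finite) simp
  have X: "?T -` B \<inter> space Om \<in> sets Om" using T_meas B by (rule measurable_sets)
  have TPm: "(\<lambda>\<omega>. indicator B (?T (Phi s \<omega>)) :: ennreal) \<in> borel_measurable Om" if s: "s \<in> ?G" for s
  proof -
    have "(\<lambda>\<omega>. ?T (Phi s \<omega>)) \<in> Om \<rightarrow>\<^sub>M out_space L"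
      using measurable_comp[OF Phi_meas[OF s] T_meas] by (simp add: o_def)
    then show ?thesis using B by measurable
  qed
  have P_eq: "?P = (\<integral>\<^sup>+\<omega>. indicator B (?T (Phi s \<omega>)) \<partial>Om)" if s: "s \<in> ?G" for s
  proof -
    have "?P = emeasure (distr Om Om (Phi s)) (?T -` B \<inter> space Om)" using Phi_distr[OF s] by simp
    also have "\<dots> = emeasure Om (Phi s -` (?T -` B \<inter> space Om) \<inter> space Om)"
      by (rule emeasure_distr[OF Phi_meas[OF s] X])
    also have "\<dots> = (\<integral>\<^sup>+\<omega>. indicator (Phi s -` (?T -` B \<inter> space Om) \<inter> space Om) \<omega> \<partial>Om)"
      using measurable_sets[OF Phi_meas[OF s] X] by simp
    also have "\<dots> = (\<integral>\<^sup>+\<omega>. indicator B (?T (Phi s \<omega>)) \<partial>Om)"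
    proof (rule nn_integral_cong)
      fix \<omega> assume om: "\<omega> \<in> space Om"
      have "Phi s \<omega> \<in> space Om" using measurable_space[OF Phi_meas[OF s] om] .
      then show "indicator (Phi s -` (?T -` B \<inter> space Om) \<inter> space Om) \<omega> = (indicator B (?T (Phi s \<omega>)) :: ennreal)"
        using om by (simp add: indicator_def)
    qed
    finally show ?thesis .
  qed
  have "of_nat (card ?G) * ?P = (\<Sum>s\<in>?G. ?P)" by simp
  also have "\<dots> = (\<Sum>s\<in>?G. \<integral>\<^sup>+\<omega>. indicator B (?T (Phi s \<omega>)) \<partial>Om)"
    using P_eq by (rule sum.cong[OF refl])
  also have "\<dots> = (\<integral>\<^sup>+\<omega>. (\<Sum>s\<in>?G. indicator B (?T (Phi s \<omega>))) \<partial>Om)"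
    using TPm by (rule nn_integral_sum[symmetric])
  also have "\<dots> = (\<integral>\<^sup>+\<omega>. of_nat (card {s\<in>?G. Gmap A L I s \<in> B}) \<partial>Om)"
  proof (rule nn_integral_cong_AE)
    show "AE \<omega> in Om. (\<Sum>s\<in>?G. indicator B (?T (Phi s \<omega>))) = (of_nat (card {s\<in>?G. Gmap A L I s \<in> B}) :: ennreal)"
    proof (rule AE_mp[OF AE_inj], rule AE_I2, rule impI)
      fix \<omega> assume om: "\<omega> \<in> space Om" and inj: "inj_on (sc \<omega>) {1..n}"
      have "(\<Sum>s\<in>?G. indicator B (?T (Phi s \<omega>)) :: ennreal) = (\<Sum>s\<in>?G. indicator B (Gmap A L I (rk (sc \<omega>) \<circ> s)))"
        using T_Phi[OF om inj] by (intro sum.cong) auto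
      also have "\<dots> = (\<Sum>s\<in>?G. indicator B (Gmap A L I s))"
        by (rule sum_Grp_invariant[OF _ rk_perm[OF inj] Hl]) simp
      also have "\<dots> = of_nat (card {s\<in>?G. Gmap A L I s \<in> B})"
        by (rule sum_indicator_card[OF finG])
      finally show "(\<Sum>s\<in>?G. indicator B (?T (Phi s \<omega>))) = (of_nat (card {s\<in>?G. Gmap A L I s \<in> B}) :: ennreal)" .
    qed
  qed
  also have "\<dots> = of_nat (card {s\<in>?G. Gmap A L I s \<in> B})"
    using Om.emeasure_space_1 by simp
  finally show ?thesis .
qed

lemma main_law: "Tlaw M Q SS eps A L I n = Glaw A L I n"
proof -
  let ?G = "Grp {1..n} Q"
  let ?Pm = "{p. p permutes {1..n}}"
  have finP: "finite ?Pm" by (rule finite_permutations) simp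
  have neP: "?Pm \<noteq> {}" using permutes_id by blast
  have cP: "card ?Pm > 0" using finP neP card_gt_0_iff by blast
  have cG: "card ?G > 0" using Grp_finite[of "{1..n}" Q] id_Grp[of "{1..n}" Q] by (auto simp: card_gt_0_iff)
  have Tl: "Tlaw M Q SS eps A L I n = distr Om (out_space L) (Tstat SS eps A L I)"
    unfolding Tlaw_def Om_def by (rule refl)
  show ?thesis
    unfolding Tl Glaw_def
  proof (rule measure_eqI)
    show "sets (distr Om (out_space L) (Tstat SS eps A L I)) =
          sets (distr (measure_pmf (pmf_of_set ?Pm)) (out_space L) (Gmap A L I))" by simp
    fix B assume "B \<in> sets (distr Om (out_space L) (Tstat SS eps A L I))"
    then have B: "B \<in> sets (out_space L)" by simp
    have e1: "emeasure (distr Om (out_space L) (Tstat SS eps A L I)) B = emeasure Om (Tstat SS eps A L I -` B \<inter> space Om)"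
      by (rule emeasure_distr[OF T_meas B])
    have Gm: "Gmap A L I \<in> measure_pmf (pmf_of_set ?Pm) \<rightarrow>\<^sub>M out_space L"
    proof -
      have "Gmap A L I p \<in> space (out_space L)" for p
        unfolding Gmap_def out_space_def space_PiM restrict_PiE_iff by simp
      then show ?thesis by simp
    qed
    have e2: "emeasure (distr (measure_pmf (pmf_of_set ?Pm)) (out_space L) (Gmap A L I)) B
        = ennreal (real (card {p\<in>?Pm. Gmap A L I p \<in> B}) / real (card ?Pm))"
    proof -
      have "emeasure (distr (measure_pmf (pmf_of_set ?Pm)) (out_space L) (Gmap A L I)) B
          = emeasure (measure_pmf (pmf_of_set ?Pm)) (Gmap A L I -` B \<inter> space (measure_pmf (pmf_of_set ?Pm)))"
        by (rule emeasure_distr[OF Gm B])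
      also have "\<dots> = ennreal (real (card (?Pm \<inter> (Gmap A L I -` B))) / real (card ?Pm))"
        using emeasure_pmf_of_set[OF neP finP, of "Gmap A L I -` B"] by (simp only: space_measure_pmf Int_UNIV_right)
      also have "?Pm \<inter> (Gmap A L I -` B) = {p\<in>?Pm. Gmap A L I p \<in> B}" by auto
      finally show ?thesis .
    qed
    have cnt: "card ?G * card {p\<in>?Pm. Gmap A L I p \<in> B} = card ?Pm * card {s\<in>?G. Gmap A L I s \<in> B}"
      by (rule count_perms[OF _ Hl]) simp
    have "of_nat (card ?G) * emeasure (distr (measure_pmf (pmf_of_set ?Pm)) (out_space L) (Gmap A L I)) B
        = of_nat (card {s\<in>?G. Gmap A L I s \<in> B})"
    proof -
      define k where "k = card {p\<in>?Pm. Gmap A L I p \<in> B}"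
      define c where "c = card {s\<in>?G. Gmap A L I s \<in> B}"
      have r: "real (card ?G) * real k = real (card ?Pm) * real c"
        unfolding k_def c_def by (simp only: of_nat_mult[symmetric] cnt)
      have "real (card ?G) * (real k / real (card ?Pm)) = (real (card ?G) * real k) / real (card ?Pm)"
        by simp
      also have "\<dots> = (real (card ?Pm) * real c) / real (card ?Pm)" by (simp only: r)
      also have "\<dots> = real c" using cP by simp
      finally have rr: "real (card ?G) * (real k / real (card ?Pm)) = real c" .
      have "ennreal (real (card ?G)) * ennreal (real k / real (card ?Pm)) = ennreal (real (card ?G) * (real k / real (card ?Pm)))"
        by (rule ennreal_mult[symmetric]) simp_all
      also have "\<dots> = ennreal (real c)" by (simp only: rr)
      finally show ?thesis unfolding e2 ennreal_of_nat_eq_real_of_nat k_def c_def .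
    qed
    then have "of_nat (card ?G) * emeasure (distr Om (out_space L) (Tstat SS eps A L I)) B =
          of_nat (card ?G) * emeasure (distr (measure_pmf (pmf_of_set ?Pm)) (out_space L) (Gmap A L I)) B"
      unfolding e1 key_T[OF B] by (rule sym)
    then show "emeasure (distr Om (out_space L) (Tstat SS eps A L I)) B =
          emeasure (distr (measure_pmf (pmf_of_set ?Pm)) (out_space L) (Gmap A L I)) B"
      by (rule ennreal_nat_cancel[OF cG])
  qed
qed

end

theorem theorem2:
  fixes M :: "'a measure"
    and SS :: "'a \<Rightarrow> (nat \<Rightarrow> 'a) \<Rightarrow> real"
    and eps :: real
    and A :: "nat list \<Rightarrow> real"
    and n L :: nat
    and I :: "nat \<Rightarrow> nat set"
  assumes eps_pos: "eps > 0"
    and SS_meas: "(\<lambda>(z, D). SS z D) \<in> M \<Otimes>\<^sub>M PiM {1..n} (\<lambda>_. M) \<rightarrow>\<^sub>M borel"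
    and SS_sym: "\<And>z D \<pi>. z \<in> space M \<Longrightarrow> D \<in> space (PiM {1..n} (\<lambda>_. M)) \<Longrightarrow>
                   \<pi> permutes {1..n} \<Longrightarrow> SS z D = SS z (\<lambda>j. D (\<pi> j))"
    and I_sub: "\<And>l. l \<in> {1..L} \<Longrightarrow> I l \<subseteq> {1..n}"
    and I_ne: "\<And>l. l \<in> {1..L} \<Longrightarrow> I l \<noteq> {}"
  shows
    "(\<forall>P1. prob_space P1 \<and> sets P1 = sets M \<longrightarrow>
          Tlaw M (\<lambda>_. P1) SS eps A L I n = Glaw A L I n)
     \<and>
     (\<forall>(K::nat) (\<tau>::nat \<Rightarrow> nat) (P::nat \<Rightarrow> 'a measure) (Q::nat \<Rightarrow> 'a measure).
        (\<tau> 0 = 0 \<and> \<tau> (K + 1) = n \<and> (\<forall>k \<le> K. \<tau> k < \<tau> (k + 1))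
         \<and> (\<forall>k \<in> {1..K+1}. prob_space (P k) \<and> sets (P k) = sets M)
         \<and> (\<forall>k \<in> {1..K}. P (k + 1) \<noteq> P k)
         \<and> (\<forall>k \<in> {1..K+1}. \<forall>i \<in> {\<tau> (k - 1)<..\<tau> k}. Q i = P k)
         \<and> (\<forall>l \<in> {1..L}. \<exists>k \<in> {1..K+1}. I l \<subseteq> {\<tau> (k - 1)<..\<tau> k}))
        \<longrightarrow> Tlaw M Q SS eps A L I n = Glaw A L I n)"
proof (intro conjI allI impI)
  fix P1 :: "'a measure" assume h: "prob_space P1 \<and> sets P1 = sets M"
  interpret cpset M "\<lambda>_. P1" SS eps A n L I
  proof (rule cpset.intro)
    show "eps > 0" by (rule eps_pos)
    show "(\<lambda>(z, D). SS z D) \<in> M \<Otimes>\<^sub>M PiM {1..n} (\<lambda>_. M) \<rightarrow>\<^sub>M borel" by (rule SS_meas)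
    show "\<And>z D \<pi>. z \<in> space M \<Longrightarrow> D \<in> space (PiM {1..n} (\<lambda>_. M)) \<Longrightarrow>
                   \<pi> permutes {1..n} \<Longrightarrow> SS z D = SS z (\<lambda>j. D (\<pi> j))" by (rule SS_sym)
    show "\<And>l. l \<in> {1..L} \<Longrightarrow> I l \<subseteq> {1..n}" by (rule I_sub)
    show "\<And>i. i \<in> {1..n} \<Longrightarrow> prob_space P1" using h by blast
    show "\<And>i. i \<in> {1..n} \<Longrightarrow> sets P1 = sets M" using h by blast
    show "\<And>l i j. l \<in> {1..L} \<Longrightarrow> i \<in> I l \<Longrightarrow> j \<in> I l \<Longrightarrow> P1 = P1" by (rule refl)
  qed
  show "Tlaw M (\<lambda>_. P1) SS eps A L I n = Glaw A L I n" by (rule main_law)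
next
  fix K :: nat and \<tau> :: "nat \<Rightarrow> nat" and P Q :: "nat \<Rightarrow> 'a measure"
  assume h: "\<tau> 0 = 0 \<and> \<tau> (K + 1) = n \<and> (\<forall>k \<le> K. \<tau> k < \<tau> (k + 1))
         \<and> (\<forall>k \<in> {1..K+1}. prob_space (P k) \<and> sets (P k) = sets M)
         \<and> (\<forall>k \<in> {1..K}. P (k + 1) \<noteq> P k)
         \<and> (\<forall>k \<in> {1..K+1}. \<forall>i \<in> {\<tau> (k - 1)<..\<tau> k}. Q i = P k)
         \<and> (\<forall>l \<in> {1..L}. \<exists>k \<in> {1..K+1}. I l \<subseteq> {\<tau> (k - 1)<..\<tau> k})"
  have t0: "\<tau> 0 = 0" using h by (rule conjunct1)
  have tK: "\<tau> (K + 1) = n" using h[THEN conjunct2, THEN conjunct1] .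
  have Pp': "\<forall>k \<in> {1..K+1}. prob_space (P k) \<and> sets (P k) = sets M"
    using h[THEN conjunct2, THEN conjunct2, THEN conjunct2, THEN conjunct1] .
  have QP': "\<forall>k \<in> {1..K+1}. \<forall>i \<in> {\<tau> (k - 1)<..\<tau> k}. Q i = P k"
    using h[THEN conjunct2, THEN conjunct2, THEN conjunct2, THEN conjunct2, THEN conjunct2, THEN conjunct1] .
  have Il': "\<forall>l \<in> {1..L}. \<exists>k \<in> {1..K+1}. I l \<subseteq> {\<tau> (k - 1)<..\<tau> k}"
    using h[THEN conjunct2, THEN conjunct2, THEN conjunct2, THEN conjunct2, THEN conjunct2, THEN conjunct2] .
  have Pp: "prob_space (P k) \<and> sets (P k) = sets M" if "k \<in> {1..K+1}" for k
    using Pp' that by (rule bspec)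
  have QP: "Q i = P k" if "k \<in> {1..K+1}" "i \<in> {\<tau> (k - 1)<..\<tau> k}" for k i
    using QP' that by blast
  have Il: "\<exists>k \<in> {1..K+1}. I l \<subseteq> {\<tau> (k - 1)<..\<tau> k}" if "l \<in> {1..L}" for l
    using Il' that by (rule bspec)
  have blk: "\<exists>k \<in> {1..K+1}. i \<in> {\<tau> (k - 1)<..\<tau> k}" if i: "i \<in> {1..n}" for i
  proof -
    define k where "k = (LEAST k. i \<le> \<tau> k)"
    have ex: "i \<le> \<tau> (K + 1)" using i tK by simp
    have ik: "i \<le> \<tau> k" unfolding k_def by (rule LeastI[where P="\<lambda>k. i \<le> \<tau> k", OF ex])
    have kle: "k \<le> K + 1" unfolding k_def by (rule Least_le[where P="\<lambda>k. i \<le> \<tau> k", OF ex])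
    have k0: "k \<noteq> 0"
    proof
      assume "k = 0"
      then show False using ik t0 i by simp
    qed
    have "k - 1 < k" using k0 by simp
    then have "\<not> i \<le> \<tau> (k - 1)" unfolding k_def by (rule not_less_Least[where P="\<lambda>k. i \<le> \<tau> k"])
    then have "i \<in> {\<tau> (k - 1)<..\<tau> k}" using ik by simp
    moreover have "k \<in> {1..K+1}" using kle k0 by simp
    ultimately show ?thesis by blast
  qed
  have Qprop: "prob_space (Q i) \<and> sets (Q i) = sets M" if i: "i \<in> {1..n}" for i
  proof -
    obtain k where k: "k \<in> {1..K+1}" and ik: "i \<in> {\<tau> (k - 1)<..\<tau> k}" using blk[OF i] by blast
    show ?thesis using QP[OF k ik] Pp[OF k] by simp
  qed
  interpret cpset M Q SS eps A n L I
  proof (rule cpset.intro)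
    show "eps > 0" by (rule eps_pos)
    show "(\<lambda>(z, D). SS z D) \<in> M \<Otimes>\<^sub>M PiM {1..n} (\<lambda>_. M) \<rightarrow>\<^sub>M borel" by (rule SS_meas)
    show "\<And>z D \<pi>. z \<in> space M \<Longrightarrow> D \<in> space (PiM {1..n} (\<lambda>_. M)) \<Longrightarrow>
                   \<pi> permutes {1..n} \<Longrightarrow> SS z D = SS z (\<lambda>j. D (\<pi> j))" by (rule SS_sym)
    show "\<And>l. l \<in> {1..L} \<Longrightarrow> I l \<subseteq> {1..n}" by (rule I_sub)
    show "\<And>i. i \<in> {1..n} \<Longrightarrow> prob_space (Q i)" using Qprop by blast
    show "\<And>i. i \<in> {1..n} \<Longrightarrow> sets (Q i) = sets M" using Qprop by blast
    show "Q i = Q j" if l: "l \<in> {1..L}" and i: "i \<in> I l" and j: "j \<in> I l" for l i j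
    proof -
      obtain k where k: "k \<in> {1..K+1}" and sub: "I l \<subseteq> {\<tau> (k - 1)<..\<tau> k}" using Il[OF l] by blast
      have "Q i = P k" using QP[OF k] sub i by blast
      moreover have "Q j = P k" using QP[OF k] sub j by blast
      ultimately show ?thesis by simp
    qed
  qed
  show "Tlaw M Q SS eps A L I n = Glaw A L I n" by (rule main_law)
qed

end
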